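(* Let $(E,\varepsilon)$ be a pointed set, $(\Omega,D)$ a recombination chromology and $b\in\Omega$ an element such that $(\Omega,D,FE_b^{\varepsilon})$ is a recombination scheme. Then for every sequence alignment $(\iota,T,\sigma)$ over $\mathbf{2}E_b^{\varepsilon}$, the functor $D_ET:\mathbf{Seg}(\Omega)\to\mathbf{Icm}$ is a $\mathcal{W}^{\mathrm{mon}}$-pedigrad for $(\Omega,D)$.
   Context: Segments and $\mathbf{Seg}(\Omega)$: for $n\ge1$, $[n]=\{1,\dots,n\}$, $[0]=\emptyset$. For a pre-ordered set $(\Omega,\preceq)$, a segment is $(t,c)$ with $t:[n_1]\to[n_0]$ an order-preserving surjection and $c:[n_0]\to\Omega$; a morphism $(t,c)\to(t',c')$ is $(f_1,f_0)$ with $f_1:[n_1]\to[n_1']$ order-preserving injective, $f_0:[n_0]\to[n_0']$ order-preserving, $t'f_1=f_0t$, $c'(f_0(i))\preceq c(i)$. $\mathbf{Seg}(\Omega\,|\,n)$: segments of domain $[n]$ and morphisms with $f_1=\mathrm{id}$. A recombination chromology $(\Omega,D)$: for each $n\ge0$ a finite set $D[n]$ of wide spans (finite families $\rho_i:\tau\to\theta(i)$, $i\in[k]$) in $\mathbf{Seg}(\Omega\,|\,n)$, called cones of $D$. Ic-monoids: $\mathbf{Icm}$ is the category of idempotent commutative monoids; $F:\mathbf{Set}\to\mathbf{Icm}$ is the free functor ($F(S)$ = finite subsets of $S$ under union), left adjoint to the forgetful functor; $F$ is applied to $\mathbf{Set}$-valued functors objectwise. Environment functors: $\mathsf{Tr}_b(t,c)=\{i\in[n_1]: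 b\preceq c(t(i))\}$. $E_b^{\varepsilon}:\mathbf{Seg}(\Omega)\to\mathbf{Set}$ sends $(t,c)$ to the set of functions $u:\mathsf{Tr}_b(t,c)\to E$ and a morphism $(f_1,f_0):(t,c)\to(t',c')$ to the map $u\mapsto u'$ where $u'(j)=u(i)$ if $j=f_1(i)$ with $i\in\mathsf{Tr}_b(t,c)$, and $u'(j)=\varepsilon$ otherwise. $\mathbf{2}E_b^{\varepsilon}=E_b^{\varepsilon}\times E_b^{\varepsilon}$ (objectwise product). Recombination congruences and monoids: for $X:\mathbf{Seg}(\Omega)\to\mathbf{Icm}$ and a cone $\rho$ of $D$ with apex $\upsilon$, $X[\rho]:X(\upsilon)\to\prod_iX(\theta(i))$ has components $X(\rho_i)$ and $\mathsf{prj}_1,\mathsf{prj}_2:G(X,\rho)\rightrightarrows X(\upsilon)$ is its kernel pair. $DX$ is the functor with $q_X:X(\tau)\to DX(\tau)$ the universal $\mathbf{Icm}$-morphism with $q_X\circ X(f)\circ\mathsf{prj}_1=q_X\circ X(f)\circ\mathsf{prj}_2$ for all cones $\rho$ of $D$ (apex $\upsilon$) and all $f:\upsilon\to\tau$, with $DX(g)$ induced by $X(g)$. An object $\sigma$ is irreducible for $(\Omega,D,X)$ if for all $f:\upsilon\to\sigma$ and all cones $\rho$ of $D$ with apex $\upsilon$, $X(f)\circ\mathsf{prj}_1=X(f)\circ\mathsf{prj}_2$. $(\Omega,D,X)$ is a recombination scheme if every codomain $\theta(i)$ of a leg of a cone of $D$ is irreducible for $(\Omega,D,X)$. Sequence alignment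 over $\mathbf{2}E_b^{\varepsilon}$: a triple $(\iota,T,\sigma)$ with $\iota:B\hookrightarrow\mathbf{Seg}(\Omega)$ the inclusion of a subcategory, $T:B\to\mathbf{Set}$ a functor and $\sigma:T\Rightarrow\mathbf{2}E_b^{\varepsilon}\circ\iota$ a natural monomorphism. $\mathsf{Lan}_\iota T$ is the left Kan extension of $T$ along $\iota$ and $\sigma^*:\mathsf{Lan}_\iota T\Rightarrow\mathbf{2}E_b^{\varepsilon}$ is the transpose of $\sigma$ under the adjunction $\mathsf{Lan}_\iota\dashv(-\circ\iota)$. $\mathsf{fml}:F\mathbf{2}E_b^{\varepsilon}\Rightarrow FE_b^{\varepsilon}$ has component at $\tau$ the unique $\mathbf{Icm}$-morphism sending each singleton $\{(u,v)\}$ to $\{u,v\}$. Set $\mathsf{rec}=q_{FE_b^{\varepsilon}}\circ\mathsf{fml}\circ F\sigma^*:F\mathsf{Lan}_\iota T\Rightarrow DFE_b^{\varepsilon}$, let $y_1,y_2$ be the pullback of $\mathsf{rec}$ along itself in $[\mathbf{Seg}(\Omega),\mathbf{Icm}]$, and let $r:F\mathsf{Lan}_\iota T\Rightarrow D_ET$ be the coequalizer of $(y_1,y_2)$ (computed objectwise). $\mathcal{W}^{\mathrm{mon}}$-pedigrad for $(\Omega,D)$: a functor $P:\mathbf{Seg}(\Omega)\to\mathbf{Icm}$ such that for every cone of $D$ with legs $\rho_i:\tau\to\theta(i)$, $i\in[k]$, the induced map $P(\tau)\to\prod_{i\in[k]}P(\theta(i))$ is a monomorphism in $\mathbf{Icm}$.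 *)

theory Defs
  imports Main "HOL-Library.FuncSet"
begin

section \<open>Segments and the category Seg(Omega)\<close>

text \<open>[n] = {1..n} is encoded 0-based as {0..<n}.  A segment (t,c) with
  t : [n1] -> [n0], c : [n0] -> Omega is encoded by the lists
  t = [t(1),...,t(n1)] (values shifted by -1) and c = [c(1),...,c(n0)].\<close>

type_synonym 'o seg = "nat list \<times> 'o list"
type_synonym 'o smor = "'o seg \<times> 'o seg \<times> nat list \<times> nat list"

definition is_seg :: "'o seg \<Rightarrow> bool" where
  "is_seg s \<longleftrightarrow> sorted (fst s) \<and> set (fst s) = {0..<length (snd s)}"

definition msrc :: "'o smor \<Rightarrow> 'o seg" where "msrc m = fst m"
definition mtgt :: "'o smor \<Rightarrow> 'o seg" where "mtgt m = fst (snd m)"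
definition mf1 :: "'o smor \<Rightarrow> nat list" where "mf1 m = fst (snd (snd m))"
definition mf0 :: "'o smor \<Rightarrow> nat list" where "mf0 m = snd (snd (snd m))"

definition is_mor :: "('o::preorder) smor \<Rightarrow> bool" where
  "is_mor m \<longleftrightarrow> (case m of (s, s', f1, f0) \<Rightarrow>
     is_seg s \<and> is_seg s' \<and>
     length f1 = length (fst s) \<and> length f0 = length (snd s) \<and>
     sorted_wrt (<) f1 \<and> set f1 \<subseteq> {0..<length (fst s')} \<and>
     sorted f0 \<and> set f0 \<subseteq> {0..<length (snd s')} \<and>
     (\<forall>i<length f1. fst s' ! (f1 ! i) = f0 ! (fst s ! i)) \<and>
     (\<forall>i<length f0. snd s' ! (f0 ! i) \<le> snd s ! i))"

definition mcomp :: "'o smor \<Rightarrow> 'o smor \<Rightarrow> 'o smor" where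
  "mcomp g f = (msrc f, mtgt g, map (\<lambda>i. mf1 g ! i) (mf1 f), map (\<lambda>i. mf0 g ! i) (mf0 f))"

definition mid :: "'o seg \<Rightarrow> 'o smor" where
  "mid s = (s, s, [0..<length (fst s)], [0..<length (snd s)])"

definition Tr :: "('o::preorder) \<Rightarrow> 'o seg \<Rightarrow> nat set" where
  "Tr b s = {i. i < length (fst s) \<and> b \<le> snd s ! (fst s ! i)}"

definition Env :: "('o::preorder) \<Rightarrow> 'o seg \<Rightarrow> (nat \<Rightarrow> 'e) set" where
  "Env b s = (Tr b s \<rightarrow>\<^sub>E (UNIV :: 'e set))"

definition env_map :: "('o::preorder) \<Rightarrow> 'e \<Rightarrow> 'o smor \<Rightarrow> (nat \<Rightarrow> 'e) \<Rightarrow> (nat \<Rightarrow> 'e)" where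
  "env_map b \<epsilon> m u = (\<lambda>j. if j \<in> Tr b (mtgt m) then
       (if \<exists>i\<in>Tr b (msrc m). mf1 m ! i = j
        then u (SOME i. i \<in> Tr b (msrc m) \<and> mf1 m ! i = j) else \<epsilon>)
     else undefined)"

definition twoE_map :: "('o::preorder) \<Rightarrow> 'e \<Rightarrow> 'o smor \<Rightarrow>
    (nat \<Rightarrow> 'e) \<times> (nat \<Rightarrow> 'e) \<Rightarrow> (nat \<Rightarrow> 'e) \<times> (nat \<Rightarrow> 'e)" where
  "twoE_map b \<epsilon> m p = (env_map b \<epsilon> m (fst p), env_map b \<epsilon> m (snd p))"

section \<open>Free ic-monoids (finite subsets under union)\<close>

definition FinPow :: "'a set \<Rightarrow> 'a set set" where
  "FinPow S = {A. finite A \<and> A \<subseteq> S}"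

definition FE_ob :: "('o::preorder) \<Rightarrow> 'o seg \<Rightarrow> (nat \<Rightarrow> 'e) set set" where
  "FE_ob b s = FinPow (Env b s)"

definition FE_map :: "('o::preorder) \<Rightarrow> 'e \<Rightarrow> 'o smor \<Rightarrow> (nat \<Rightarrow> 'e) set \<Rightarrow> (nat \<Rightarrow> 'e) set" where
  "FE_map b \<epsilon> m A = env_map b \<epsilon> m ` A"

inductive_set ucong :: "'a set set \<Rightarrow> ('a set \<times> 'a set) set \<Rightarrow> ('a set \<times> 'a set) set"
  for S R where
  gen: "(x, y) \<in> R \<Longrightarrow> x \<in> S \<Longrightarrow> y \<in> S \<Longrightarrow> (x, y) \<in> ucong S R"
| refl: "x \<in> S \<Longrightarrow> (x, x) \<in> ucong S R"
| sym: "(x, y) \<in> ucong S R \<Longrightarrow> (y, x) \<in> ucong S R"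
| trans: "(x, y) \<in> ucong S R \<Longrightarrow> (y, z) \<in> ucong S R \<Longrightarrow> (x, z) \<in> ucong S R"
| union: "(x, y) \<in> ucong S R \<Longrightarrow> (x', y') \<in> ucong S R \<Longrightarrow> (x \<union> x', y \<union> y') \<in> ucong S R"

type_synonym 'o cone = "'o seg \<times> 'o smor list"  \<comment> \<open>(apex, legs)\<close>

definition cone_in :: "nat \<Rightarrow> ('o::preorder) cone \<Rightarrow> bool" where
  "cone_in n \<rho> \<longleftrightarrow> is_seg (fst \<rho>) \<and> length (fst (fst \<rho>)) = n \<and>
     (\<forall>l\<in>set (snd \<rho>). is_mor l \<and> msrc l = fst \<rho> \<and>
        length (fst (mtgt l)) = n \<and> mf1 l = [0..<n])"

definition recomb_chromology :: "(nat \<Rightarrow> ('o::preorder) cone set) \<Rightarrow> bool" where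
  "recomb_chromology D \<longleftrightarrow> (\<forall>n. finite (D n) \<and> (\<forall>\<rho>\<in>D n. cone_in n \<rho>))"

definition kpair :: "('o seg \<Rightarrow> 'a set) \<Rightarrow> ('o smor \<Rightarrow> 'a \<Rightarrow> 'a) \<Rightarrow> 'o cone \<Rightarrow> ('a \<times> 'a) set" where
  "kpair Xob Xmap \<rho> = {(a, a'). a \<in> Xob (fst \<rho>) \<and> a' \<in> Xob (fst \<rho>) \<and>
      (\<forall>l\<in>set (snd \<rho>). Xmap l a = Xmap l a')}"

definition irreducible :: "(nat \<Rightarrow> ('o::preorder) cone set) \<Rightarrow> ('o seg \<Rightarrow> 'a set) \<Rightarrow>
    ('o smor \<Rightarrow> 'a \<Rightarrow> 'a) \<Rightarrow> 'o seg \<Rightarrow> bool" where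
  "irreducible D Xob Xmap s \<longleftrightarrow> (\<forall>n \<rho> f. \<rho> \<in> D n \<longrightarrow> is_mor f \<longrightarrow> msrc f = fst \<rho> \<longrightarrow>
      mtgt f = s \<longrightarrow> (\<forall>(a, a')\<in>kpair Xob Xmap \<rho>. Xmap f a = Xmap f a'))"

definition recomb_scheme :: "(nat \<Rightarrow> ('o::preorder) cone set) \<Rightarrow> ('o seg \<Rightarrow> 'a set) \<Rightarrow>
    ('o smor \<Rightarrow> 'a \<Rightarrow> 'a) \<Rightarrow> bool" where
  "recomb_scheme D Xob Xmap \<longleftrightarrow>
     (\<forall>n. \<forall>\<rho>\<in>D n. \<forall>l\<in>set (snd \<rho>). irreducible D Xob Xmap (mtgt l))"

definition D_rel :: "(nat \<Rightarrow> ('o::preorder) cone set) \<Rightarrow> ('o seg \<Rightarrow> 'a set set) \<Rightarrow>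
    ('o smor \<Rightarrow> 'a set \<Rightarrow> 'a set) \<Rightarrow> 'o seg \<Rightarrow> ('a set \<times> 'a set) set" where
  "D_rel D Xob Xmap t = {(Xmap f a, Xmap f a') | n \<rho> f a a'. \<rho> \<in> D n \<and> is_mor f \<and>
      msrc f = fst \<rho> \<and> mtgt f = t \<and> (a, a') \<in> kpair Xob Xmap \<rho>}"

definition D_cong :: "(nat \<Rightarrow> ('o::preorder) cone set) \<Rightarrow> ('o seg \<Rightarrow> 'a set set) \<Rightarrow>
    ('o smor \<Rightarrow> 'a set \<Rightarrow> 'a set) \<Rightarrow> 'o seg \<Rightarrow> ('a set \<times> 'a set) set" where
  "D_cong D Xob Xmap t = ucong (Xob t) (D_rel D Xob Xmap t)"

definition qD :: "(nat \<Rightarrow> ('o::preorder) cone set) \<Rightarrow> ('o seg \<Rightarrow> 'a set set) \<Rightarrow>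
    ('o smor \<Rightarrow> 'a set \<Rightarrow> 'a set) \<Rightarrow> 'o seg \<Rightarrow> 'a set \<Rightarrow> 'a set set" where
  "qD D Xob Xmap t a = D_cong D Xob Xmap t `` {a}"

definition is_subcat :: "('o::preorder) seg set \<Rightarrow> 'o smor set \<Rightarrow> bool" where
  "is_subcat Bob Bmor \<longleftrightarrow>
     (\<forall>\<beta>\<in>Bob. is_seg \<beta> \<and> mid \<beta> \<in> Bmor) \<and>
     (\<forall>m\<in>Bmor. is_mor m \<and> msrc m \<in> Bob \<and> mtgt m \<in> Bob) \<and>
     (\<forall>f\<in>Bmor. \<forall>g\<in>Bmor. mtgt f = msrc g \<longrightarrow> mcomp g f \<in> Bmor)"

definition is_functor_on :: "'o seg set \<Rightarrow> 'o smor set \<Rightarrow> ('o seg \<Rightarrow> 'x set) \<Rightarrow>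
    ('o smor \<Rightarrow> 'x \<Rightarrow> 'x) \<Rightarrow> bool" where
  "is_functor_on Bob Bmor Tob Tmap \<longleftrightarrow>
     (\<forall>m\<in>Bmor. Tmap m \<in> Tob (msrc m) \<rightarrow> Tob (mtgt m)) \<and>
     (\<forall>\<beta>\<in>Bob. \<forall>x\<in>Tob \<beta>. Tmap (mid \<beta>) x = x) \<and>
     (\<forall>f\<in>Bmor. \<forall>g\<in>Bmor. mtgt f = msrc g \<longrightarrow>
        (\<forall>x\<in>Tob (msrc f). Tmap (mcomp g f) x = Tmap g (Tmap f x)))"

definition seq_alignment :: "('o::preorder) \<Rightarrow> 'e \<Rightarrow> 'o seg set \<Rightarrow> 'o smor set \<Rightarrow>
    ('o seg \<Rightarrow> 'x set) \<Rightarrow> ('o smor \<Rightarrow> 'x \<Rightarrow> 'x) \<Rightarrow>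
    ('o seg \<Rightarrow> 'x \<Rightarrow> (nat \<Rightarrow> 'e) \<times> (nat \<Rightarrow> 'e)) \<Rightarrow> bool" where
  "seq_alignment b \<epsilon> Bob Bmor Tob Tmap \<sigma> \<longleftrightarrow>
     is_subcat Bob Bmor \<and> is_functor_on Bob Bmor Tob Tmap \<and>
     (\<forall>\<beta>\<in>Bob. \<sigma> \<beta> \<in> Tob \<beta> \<rightarrow> Env b \<beta> \<times> Env b \<beta> \<and> inj_on (\<sigma> \<beta>) (Tob \<beta>)) \<and>
     (\<forall>m\<in>Bmor. \<forall>x\<in>Tob (msrc m). \<sigma> (mtgt m) (Tmap m x) = twoE_map b \<epsilon> m (\<sigma> (msrc m) x))"

section \<open>Left Kan extension (pointwise colimit formula)\<close>

definition lan_elems :: "('o::preorder) seg set \<Rightarrow> ('o seg \<Rightarrow> 'x set) \<Rightarrow> 'o seg \<Rightarrow>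
    ('o seg \<times> 'o smor \<times> 'x) set" where
  "lan_elems Bob Tob t = {(\<beta>, g, x). \<beta> \<in> Bob \<and> is_mor g \<and> msrc g = \<beta> \<and> mtgt g = t \<and> x \<in> Tob \<beta>}"

inductive_set lan_rel :: "('o::preorder) seg set \<Rightarrow> 'o smor set \<Rightarrow> ('o seg \<Rightarrow> 'x set) \<Rightarrow>
    ('o smor \<Rightarrow> 'x \<Rightarrow> 'x) \<Rightarrow> 'o seg \<Rightarrow>
    (('o seg \<times> 'o smor \<times> 'x) \<times> ('o seg \<times> 'o smor \<times> 'x)) set"
  for Bob Bmor Tob Tmap t where
  gen: "h \<in> Bmor \<Longrightarrow> is_mor g \<Longrightarrow> msrc g = mtgt h \<Longrightarrow> mtgt g = t \<Longrightarrow> x \<in> Tob (msrc h) \<Longrightarrow>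
        ((msrc h, mcomp g h, x), (mtgt h, g, Tmap h x)) \<in> lan_rel Bob Bmor Tob Tmap t"
| refl: "p \<in> lan_elems Bob Tob t \<Longrightarrow> (p, p) \<in> lan_rel Bob Bmor Tob Tmap t"
| sym: "(p, p') \<in> lan_rel Bob Bmor Tob Tmap t \<Longrightarrow> (p', p) \<in> lan_rel Bob Bmor Tob Tmap t"
| trans: "(p, p') \<in> lan_rel Bob Bmor Tob Tmap t \<Longrightarrow> (p', p'') \<in> lan_rel Bob Bmor Tob Tmap t \<Longrightarrow>
          (p, p'') \<in> lan_rel Bob Bmor Tob Tmap t"

definition lan_ob where
  "lan_ob Bob Bmor Tob Tmap t = lan_elems Bob Tob t // lan_rel Bob Bmor Tob Tmap t"

definition lan_map where
  "lan_map Bob Bmor Tob Tmap m C =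
     lan_rel Bob Bmor Tob Tmap (mtgt m) `` ((\<lambda>(\<beta>, g, x). (\<beta>, mcomp m g, x)) ` C)"

text \<open>The transpose sigma* : Lan T => 2E of sigma.\<close>
definition lan_sigma :: "('o::preorder) \<Rightarrow> 'e \<Rightarrow> ('o seg \<Rightarrow> 'x \<Rightarrow> (nat \<Rightarrow> 'e) \<times> (nat \<Rightarrow> 'e)) \<Rightarrow>
    ('o seg \<times> 'o smor \<times> 'x) set \<Rightarrow> (nat \<Rightarrow> 'e) \<times> (nat \<Rightarrow> 'e)" where
  "lan_sigma b \<epsilon> \<sigma> C = (case (SOME p. p \<in> C) of (\<beta>, g, x) \<Rightarrow> twoE_map b \<epsilon> g (\<sigma> \<beta> x))"

definition FLan_ob where
  "FLan_ob Bob Bmor Tob Tmap t = FinPow (lan_ob Bob Bmor Tob Tmap t)"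

definition FLan_map where
  "FLan_map Bob Bmor Tob Tmap m A = lan_map Bob Bmor Tob Tmap m ` A"

section \<open>The functor D_E T\<close>

definition fml :: "('a \<times> 'a) set \<Rightarrow> 'a set" where
  "fml A = (\<Union>(u, v)\<in>A. {u, v})"

definition recmap :: "(nat \<Rightarrow> ('o::preorder) cone set) \<Rightarrow> 'o \<Rightarrow> 'e \<Rightarrow>
    ('o seg \<Rightarrow> 'x \<Rightarrow> (nat \<Rightarrow> 'e) \<times> (nat \<Rightarrow> 'e)) \<Rightarrow> 'o seg \<Rightarrow>
    ('o seg \<times> 'o smor \<times> 'x) set set \<Rightarrow> (nat \<Rightarrow> 'e) set set" where
  "recmap D b \<epsilon> \<sigma> t A = qD D (FE_ob b) (FE_map b \<epsilon>) t (fml (lan_sigma b \<epsilon> \<sigma> ` A))"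

text \<open>Pullback of rec along itself (objectwise); y1 = fst, y2 = snd.\<close>
definition rec_pb where
  "rec_pb D b \<epsilon> Bob Bmor Tob Tmap \<sigma> t =
     {(A, A'). A \<in> FLan_ob Bob Bmor Tob Tmap t \<and> A' \<in> FLan_ob Bob Bmor Tob Tmap t \<and>
        recmap D b \<epsilon> \<sigma> t A = recmap D b \<epsilon> \<sigma> t A'}"

text \<open>Coequalizer of (y1, y2) in Icm: quotient by the congruence generated by the pairs (y1 p, y2 p).\<close>
definition DET_cong where
  "DET_cong D b \<epsilon> Bob Bmor Tob Tmap \<sigma> t =
     ucong (FLan_ob Bob Bmor Tob Tmap t) ((\<lambda>p. (fst p, snd p)) ` rec_pb D b \<epsilon> Bob Bmor Tob Tmap \<sigma> t)"

definition DET_ob where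
  "DET_ob D b \<epsilon> Bob Bmor Tob Tmap \<sigma> t =
     FLan_ob Bob Bmor Tob Tmap t // DET_cong D b \<epsilon> Bob Bmor Tob Tmap \<sigma> t"

definition DET_map where
  "DET_map D b \<epsilon> Bob Bmor Tob Tmap \<sigma> m K =
     DET_cong D b \<epsilon> Bob Bmor Tob Tmap \<sigma> (mtgt m) `` (FLan_map Bob Bmor Tob Tmap m ` K)"

text \<open>Monomorphisms in Icm are the injective homomorphisms.\<close>
definition mon_pedigrad :: "(nat \<Rightarrow> ('o::preorder) cone set) \<Rightarrow> ('o seg \<Rightarrow> 'p set) \<Rightarrow>
    ('o smor \<Rightarrow> 'p \<Rightarrow> 'p) \<Rightarrow> bool" where
  "mon_pedigrad D Pob Pmap \<longleftrightarrow>
     (\<forall>n. \<forall>\<rho>\<in>D n. inj_on (\<lambda>K. map (\<lambda>l. Pmap l K) (snd \<rho>)) (Pob (fst \<rho>)))"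

end

theory Submission
  imports Defs
begin

lemma msrc_simp[simp]: "msrc (s, s', f1, f0) = s" by (simp add: msrc_def)
lemma mtgt_simp[simp]: "mtgt (s, s', f1, f0) = s'" by (simp add: mtgt_def)
lemma mf1_simp[simp]: "mf1 (s, s', f1, f0) = f1" by (simp add: mf1_def)
lemma mf0_simp[simp]: "mf0 (s, s', f1, f0) = f0" by (simp add: mf0_def)

lemma msrc_mcomp[simp]: "msrc (mcomp g f) = msrc f" by (simp add: mcomp_def)
lemma mtgt_mcomp[simp]: "mtgt (mcomp g f) = mtgt g" by (simp add: mcomp_def)
lemma mf1_mcomp[simp]: "mf1 (mcomp g f) = map (\<lambda>i. mf1 g ! i) (mf1 f)" by (simp add: mcomp_def)
lemma mf0_mcomp[simp]: "mf0 (mcomp g f) = map (\<lambda>i. mf0 g ! i) (mf0 f)" by (simp add: mcomp_def)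
lemma msrc_mid[simp]: "msrc (mid s) = s" by (simp add: mid_def)
lemma mtgt_mid[simp]: "mtgt (mid s) = s" by (simp add: mid_def)
lemma mf1_mid[simp]: "mf1 (mid s) = [0..<length (fst s)]" by (simp add: mid_def)
lemma mf0_mid[simp]: "mf0 (mid s) = [0..<length (snd s)]" by (simp add: mid_def)

lemma smor_eq:
  "msrc m = msrc m' \<Longrightarrow> mtgt m = mtgt m' \<Longrightarrow> mf1 m = mf1 m' \<Longrightarrow> mf0 m = mf0 m' \<Longrightarrow> m = m'"
  by (cases m, cases m') simp

lemma is_mor_alt:
  "is_mor m \<longleftrightarrow> is_seg (msrc m) \<and> is_seg (mtgt m) \<and>
     length (mf1 m) = length (fst (msrc m)) \<and> length (mf0 m) = length (snd (msrc m)) \<and>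
     sorted_wrt (<) (mf1 m) \<and> set (mf1 m) \<subseteq> {0..<length (fst (mtgt m))} \<and>
     sorted (mf0 m) \<and> set (mf0 m) \<subseteq> {0..<length (snd (mtgt m))} \<and>
     (\<forall>i<length (mf1 m). fst (mtgt m) ! (mf1 m ! i) = mf0 m ! (fst (msrc m) ! i)) \<and>
     (\<forall>i<length (mf0 m). snd (mtgt m) ! (mf0 m ! i) \<le> snd (msrc m) ! i)"
  by (cases m) (simp add: is_mor_def)

lemma is_morD:
  assumes "is_mor m"
  shows "is_seg (msrc m)" "is_seg (mtgt m)"
    "length (mf1 m) = length (fst (msrc m))" "length (mf0 m) = length (snd (msrc m))"
    "sorted_wrt (<) (mf1 m)" "set (mf1 m) \<subseteq> {0..<length (fst (mtgt m))}"
    "sorted (mf0 m)" "set (mf0 m) \<subseteq> {0..<length (snd (mtgt m))}"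
  using assms unfolding is_mor_alt by blast+

lemma is_seg_nth: "is_seg s \<Longrightarrow> i < length (fst s) \<Longrightarrow> fst s ! i < length (snd s)"
  unfolding is_seg_def by (metis atLeastLessThan_iff nth_mem)

lemma mcomp_is_mor:
  assumes g: "is_mor g" and h: "is_mor h" and gh: "mtgt h = msrc g"
  shows "is_mor (mcomp g h)"
proof -
  note G = g[unfolded is_mor_alt] and H = h[unfolded is_mor_alt]
  have h1r: "\<And>x. x \<in> set (mf1 h) \<Longrightarrow> x < length (mf1 g)" using G H gh by auto
  have h0r: "\<And>x. x \<in> set (mf0 h) \<Longrightarrow> x < length (mf0 g)" using G H gh by auto
  have s1: "sorted_wrt (<) (map (\<lambda>i. mf1 g ! i) (mf1 h))"
    unfolding sorted_wrt_map
  proof (rule sorted_wrt_mono_rel[of _ "(<)"])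
    fix x y assume "x \<in> set (mf1 h)" "y \<in> set (mf1 h)" "x < y"
    then show "mf1 g ! x < mf1 g ! y" using h1r G sorted_wrt_nth_less by blast
  qed (use H in simp)
  have s0: "sorted (map (\<lambda>i. mf0 g ! i) (mf0 h))"
    unfolding sorted_map
  proof (rule sorted_wrt_mono_rel[of _ "(\<le>)"])
    fix x y assume "x \<in> set (mf0 h)" "y \<in> set (mf0 h)" "x \<le> y"
    then show "mf0 g ! x \<le> mf0 g ! y" using h0r G sorted_nth_mono by blast
  qed (use H in simp)
  have c1: "fst (mtgt g) ! (mf1 g ! (mf1 h ! i)) = mf0 g ! (mf0 h ! (fst (msrc h) ! i))"
    if i: "i < length (mf1 h)" for i
  proof -
    have "mf1 h ! i < length (mf1 g)" using h1r i by simp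
    then have "fst (mtgt g) ! (mf1 g ! (mf1 h ! i)) = mf0 g ! (fst (msrc g) ! (mf1 h ! i))" using G by blast
    also have "fst (msrc g) ! (mf1 h ! i) = mf0 h ! (fst (msrc h) ! i)" using H i gh by auto
    finally show ?thesis .
  qed
  have c0: "snd (mtgt g) ! (mf0 g ! (mf0 h ! i)) \<le> snd (msrc h) ! i"
    if i: "i < length (mf0 h)" for i
  proof -
    have k: "mf0 h ! i < length (mf0 g)" using h0r i by simp
    have "snd (mtgt g) ! (mf0 g ! (mf0 h ! i)) \<le> snd (msrc g) ! (mf0 h ! i)" using G k by blast
    also have "snd (msrc g) ! (mf0 h ! i) \<le> snd (msrc h) ! i" using H i gh by auto
    finally show ?thesis .
  qed
  have r1: "set (map (\<lambda>i. mf1 g ! i) (mf1 h)) \<subseteq> {0..<length (fst (mtgt g))}"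
    using h1r G by (auto dest!: nth_mem)
  have r0: "set (map (\<lambda>i. mf0 g ! i) (mf0 h)) \<subseteq> {0..<length (snd (mtgt g))}"
    using h0r G by (auto dest!: nth_mem)
  have len0: "\<And>i. i < length (mf1 h) \<Longrightarrow> fst (msrc h) ! i < length (mf0 h)"
  proof -
    fix i assume "i < length (mf1 h)"
    then show "fst (msrc h) ! i < length (mf0 h)" using H is_seg_nth[of "msrc h" i] by simp
  qed
  have hs: "is_seg (msrc h)" and gs: "is_seg (mtgt g)"
    and l1: "length (mf1 h) = length (fst (msrc h))" and l0: "length (mf0 h) = length (snd (msrc h))"
    using G H by simp_all
  show ?thesis unfolding is_mor_alt msrc_mcomp mtgt_mcomp mf1_mcomp mf0_mcomp
    apply (intro conjI allI impI)
    subgoal by (rule hs)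
    subgoal by (rule gs)
    subgoal using l1 by simp
    subgoal using l0 by simp
    subgoal by (rule s1)
    subgoal by (rule r1)
    subgoal by (rule s0)
    subgoal by (rule r0)
    subgoal for i
    proof -
      assume i: "i < length (map (\<lambda>i. mf1 g ! i) (mf1 h))"
      then have i': "i < length (mf1 h)" by (simp only: length_map)
      have a: "map (\<lambda>i. mf1 g ! i) (mf1 h) ! i = mf1 g ! (mf1 h ! i)" using i' by (rule nth_map)
      have b: "map (\<lambda>i. mf0 g ! i) (mf0 h) ! (fst (msrc h) ! i) = mf0 g ! (mf0 h ! (fst (msrc h) ! i))"
        using len0[OF i'] by (rule nth_map)
      show ?thesis unfolding a b by (rule c1[OF i'])
    qed
    subgoal for i
    proof -
      assume i: "i < length (map (\<lambda>i. mf0 g ! i) (mf0 h))"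
      then have i': "i < length (mf0 h)" by (simp only: length_map)
      have a: "map (\<lambda>i. mf0 g ! i) (mf0 h) ! i = mf0 g ! (mf0 h ! i)" using i' by (rule nth_map)
      show ?thesis unfolding a by (rule c0[OF i'])
    qed
    done
qed

lemma mid_is_mor: assumes "is_seg s" shows "is_mor (mid s)"
  unfolding is_mor_alt using assms is_seg_nth[OF assms]
  by (auto simp: strict_sorted_iff)

lemma mcomp_assoc:
  assumes g: "is_mor g" and h: "is_mor h" and gh: "mtgt h = msrc g"
  shows "mcomp l (mcomp g h) = mcomp (mcomp l g) h"
proof (rule smor_eq)
  note G = g[unfolded is_mor_alt] and H = h[unfolded is_mor_alt]
  have h1r: "\<And>x. x \<in> set (mf1 h) \<Longrightarrow> x < length (mf1 g)" using G H gh by auto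
  have h0r: "\<And>x. x \<in> set (mf0 h) \<Longrightarrow> x < length (mf0 g)" using G H gh by auto
  show "mf1 (mcomp l (mcomp g h)) = mf1 (mcomp (mcomp l g) h)" using h1r by simp
  show "mf0 (mcomp l (mcomp g h)) = mf0 (mcomp (mcomp l g) h)" using h0r by simp
qed simp_all

lemma Tr_len: "i \<in> Tr b s \<Longrightarrow> i < length (fst s)" by (simp add: Tr_def)

lemma Tr_back:
  assumes m: "is_mor m" and i: "i < length (fst (msrc m))" and j: "mf1 m ! i \<in> Tr b (mtgt m)"
  shows "i \<in> Tr b (msrc m)"
proof -
  note M = m[unfolded is_mor_alt]
  have k: "fst (msrc m) ! i < length (snd (msrc m))" using M i is_seg_nth by blast
  have "b \<le> snd (mtgt m) ! (fst (mtgt m) ! (mf1 m ! i))" using j by (simp add: Tr_def)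
  also have "fst (mtgt m) ! (mf1 m ! i) = mf0 m ! (fst (msrc m) ! i)" using M i by auto
  also have "snd (mtgt m) ! (mf0 m ! (fst (msrc m) ! i)) \<le> snd (msrc m) ! (fst (msrc m) ! i)"
    using M k by auto
  finally show ?thesis using i by (simp add: Tr_def)
qed

lemma mf1_inj:
  assumes m: "is_mor m" and "i \<in> Tr b (msrc m)" "i' \<in> Tr b (msrc m)" "mf1 m ! i' = mf1 m ! i"
  shows "i' = i"
proof -
  note M = m[unfolded is_mor_alt]
  have "distinct (mf1 m)" using M by (simp add: strict_sorted_iff)
  then show ?thesis using assms(2-4) M Tr_len by (metis nth_eq_iff_index_eq)
qed

lemma env_map_hit:
  assumes m: "is_mor m" and i: "i \<in> Tr b (msrc m)" and j: "mf1 m ! i \<in> Tr b (mtgt m)"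
  shows "env_map b \<epsilon> m u (mf1 m ! i) = u i"
proof -
  have "(SOME i'. i' \<in> Tr b (msrc m) \<and> mf1 m ! i' = mf1 m ! i) = i"
    using i mf1_inj[OF m i] by (intro some_equality) auto
  moreover have "\<exists>i'\<in>Tr b (msrc m). mf1 m ! i' = mf1 m ! i" using i by blast
  ultimately show ?thesis using j unfolding env_map_def by simp
qed

lemma env_map_miss:
  "j \<in> Tr b (mtgt m) \<Longrightarrow> \<not>(\<exists>i\<in>Tr b (msrc m). mf1 m ! i = j) \<Longrightarrow> env_map b \<epsilon> m u j = \<epsilon>"
  unfolding env_map_def by simp

lemma env_map_out: "j \<notin> Tr b (mtgt m) \<Longrightarrow> env_map b \<epsilon> m u j = undefined"
  unfolding env_map_def by simp

lemma env_map_comp: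
  assumes g: "is_mor g" and h: "is_mor h" and gh: "mtgt h = msrc g"
  shows "env_map b \<epsilon> (mcomp g h) u = env_map b \<epsilon> g (env_map b \<epsilon> h u)"
proof (rule ext)
  fix j
  note H = h[unfolded is_mor_alt]
  have gh_mor: "is_mor (mcomp g h)" using mcomp_is_mor[OF g h gh] .
  have Trs: "\<And>i. i \<in> Tr b (msrc h) \<Longrightarrow> i < length (mf1 h)" using is_morD(3)[OF h] Tr_len[of _ b "msrc h"] by simp
  have nth: "\<And>i. i \<in> Tr b (msrc h) \<Longrightarrow> mf1 (mcomp g h) ! i = mf1 g ! (mf1 h ! i)" using Trs by simp
  show "env_map b \<epsilon> (mcomp g h) u j = env_map b \<epsilon> g (env_map b \<epsilon> h u) j"
  proof (cases "j \<in> Tr b (mtgt g)")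
    case False then show ?thesis by (simp add: env_map_out)
  next
    case jT: True
    show ?thesis
    proof (cases "\<exists>i\<in>Tr b (msrc h). mf1 g ! (mf1 h ! i) = j")
      case True
      then obtain i where i: "i \<in> Tr b (msrc h)" and ij: "mf1 g ! (mf1 h ! i) = j" by blast
      have "mf1 h ! i \<in> set (mf1 h)" using Trs[OF i] by (rule nth_mem)
      then have hi_len: "mf1 h ! i < length (fst (msrc g))" using is_morD(6)[OF h] gh by auto
      have k: "mf1 h ! i \<in> Tr b (msrc g)" using Tr_back[OF g hi_len] jT ij by simp
      have lhs: "env_map b \<epsilon> (mcomp g h) u j = u i"
        using env_map_hit[OF gh_mor, of i b \<epsilon> u] i jT ij nth[OF i] by simp
      have "env_map b \<epsilon> g (env_map b \<epsilon> h u) j = env_map b \<epsilon> h u (mf1 h ! i)"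
        using env_map_hit[OF g k, of \<epsilon> "env_map b \<epsilon> h u"] jT ij by simp
      also have "\<dots> = u i" using env_map_hit[OF h i, of \<epsilon> u] k gh by simp
      finally show ?thesis using lhs by simp
    next
      case False
      have lhs: "env_map b \<epsilon> (mcomp g h) u j = \<epsilon>"
        using False nth jT by (intro env_map_miss) auto
      show ?thesis
      proof (cases "\<exists>k\<in>Tr b (msrc g). mf1 g ! k = j")
        case True
        then obtain k where k: "k \<in> Tr b (msrc g)" and kj: "mf1 g ! k = j" by blast
        have "env_map b \<epsilon> g (env_map b \<epsilon> h u) j = env_map b \<epsilon> h u k"
          using env_map_hit[OF g k, of \<epsilon> "env_map b \<epsilon> h u"] jT kj by simp
        also have "\<dots> = \<epsilon>" using k gh False kj by (intro env_map_miss) auto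
        finally show ?thesis using lhs by simp
      next
        case False2: False
        then show ?thesis using lhs jT by (simp add: env_map_miss)
      qed
    qed
  qed
qed

lemma env_map_Env: "env_map b \<epsilon> m u \<in> Env b (mtgt m)"
  unfolding Env_def by (rule PiE_I) (simp_all add: env_map_out)

lemma env_map_mid:
  assumes s: "is_seg s" and u: "u \<in> Env b s"
  shows "env_map b \<epsilon> (mid s) u = u"
proof (rule ext)
  fix j
  show "env_map b \<epsilon> (mid s) u j = u j"
  proof (cases "j \<in> Tr b s")
    case True
    have jl: "j < length (fst s)" using True by (rule Tr_len)
    have e: "mf1 (mid s) ! j = j" using jl by simp
    have "env_map b \<epsilon> (mid s) u (mf1 (mid s) ! j) = u j"
      by (rule env_map_hit) (use mid_is_mor[OF s] True e in simp_all)
    then show ?thesis unfolding e .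
  next
    case False
    have "u j = undefined" using u False unfolding Env_def by (rule PiE_arb)
    moreover have "env_map b \<epsilon> (mid s) u j = undefined" using False by (intro env_map_out) simp
    ultimately show ?thesis by simp
  qed
qed

lemma ucong_in:
  assumes cl: "\<And>x y. x \<in> S \<Longrightarrow> y \<in> S \<Longrightarrow> x \<union> y \<in> S"
    and "(x, y) \<in> ucong S R"
  shows "x \<in> S \<and> y \<in> S"
  using assms(2) by (induction rule: ucong.induct) (auto intro: cl)

lemma ucong_class_eq:
  assumes "(x, y) \<in> ucong S R"
  shows "ucong S R `` {x} = ucong S R `` {y}"
  using assms by (auto intro: ucong.trans ucong.sym)

lemma FinPow_Un: "x \<in> FinPow S \<Longrightarrow> y \<in> FinPow S \<Longrightarrow> x \<union> y \<in> FinPow S"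
  unfolding FinPow_def by auto

definition tw :: "('o::preorder) \<Rightarrow> 'e \<Rightarrow> ('o seg \<Rightarrow> 'x \<Rightarrow> (nat \<Rightarrow> 'e) \<times> (nat \<Rightarrow> 'e)) \<Rightarrow>
    ('o seg \<times> 'o smor \<times> 'x) \<Rightarrow> (nat \<Rightarrow> 'e) \<times> (nat \<Rightarrow> 'e)" where
  "tw b \<epsilon> \<sigma> p = (case p of (\<beta>, g, x) \<Rightarrow> twoE_map b \<epsilon> g (\<sigma> \<beta> x))"

definition val :: "('o::preorder) \<Rightarrow> 'e \<Rightarrow> ('o seg \<Rightarrow> 'x \<Rightarrow> (nat \<Rightarrow> 'e) \<times> (nat \<Rightarrow> 'e)) \<Rightarrow>
    ('o seg \<times> 'o smor \<times> 'x) set set \<Rightarrow> (nat \<Rightarrow> 'e) set" where "val b \<epsilon> \<sigma> A = fml (lan_sigma b \<epsilon> \<sigma> ` A)"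

lemma twoE_map_comp:
  assumes "is_mor g" "is_mor h" "mtgt h = msrc g"
  shows "twoE_map b \<epsilon> (mcomp g h) p = twoE_map b \<epsilon> g (twoE_map b \<epsilon> h p)"
  unfolding twoE_map_def env_map_comp[OF assms] by simp

lemma fml_Un: "fml (A \<union> B) = fml A \<union> fml B" unfolding fml_def by auto

lemma fml_twoE: "fml (twoE_map b \<epsilon> l ` S) = env_map b \<epsilon> l ` fml S"
  unfolding fml_def twoE_map_def by force

lemma val_Un: "val b \<epsilon> \<sigma> (A \<union> B) = val b \<epsilon> \<sigma> A \<union> val b \<epsilon> \<sigma> B"
  by (simp only: val_def image_Un fml_Un)

lemma FE_map_Un: "FE_map b \<epsilon> l (A \<union> B) = FE_map b \<epsilon> l A \<union> FE_map b \<epsilon> l B"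
  unfolding FE_map_def by (rule image_Un)

lemma FE_map_comp:
  assumes "is_mor g" "is_mor h" "mtgt h = msrc g"
  shows "FE_map b \<epsilon> g (FE_map b \<epsilon> h a) = FE_map b \<epsilon> (mcomp g h) a"
proof -
  have "env_map b \<epsilon> (mcomp g h) = (\<lambda>u. env_map b \<epsilon> g (env_map b \<epsilon> h u))"
    by (rule ext) (rule env_map_comp[OF assms])
  then show ?thesis unfolding FE_map_def image_image by simp
qed

lemma FE_map_mid:
  assumes s: "is_seg s" and a: "a \<in> FE_ob b s"
  shows "FE_map b \<epsilon> (mid s) a = a"
proof -
  have e: "\<And>u. u \<in> a \<Longrightarrow> env_map b \<epsilon> (mid s) u = u"
  proof -
    fix u assume "u \<in> a"
    then have "u \<in> Env b s" using a unfolding FE_ob_def FinPow_def by blast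
    then show "env_map b \<epsilon> (mid s) u = u" by (rule env_map_mid[OF s])
  qed
  have "env_map b \<epsilon> (mid s) ` a = id ` a" by (rule image_cong) (simp_all add: e)
  then show ?thesis unfolding FE_map_def by simp
qed

lemma recmap_val: "recmap D b \<epsilon> \<sigma> t A = D_cong D (FE_ob b) (FE_map b \<epsilon>) t `` {val b \<epsilon> \<sigma> A}"
  unfolding recmap_def qD_def val_def ..

lemma irreducibleD:
  assumes "irreducible D X Xm s" "\<rho> \<in> D n" "is_mor f" "msrc f = fst \<rho>" "mtgt f = s"
    "(a, a') \<in> kpair X Xm \<rho>"
  shows "Xm f a = Xm f a'"
proof -
  have "\<forall>(a, a')\<in>kpair X Xm \<rho>. Xm f a = Xm f a'"
    using assms(1-5) unfolding irreducible_def by blast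
  then show ?thesis using assms(6) by blast
qed

lemma irr_cong_eq:
  assumes irr: "irreducible D (FE_ob b) (FE_map b \<epsilon>) \<theta>"
    and "(a, a') \<in> D_cong D (FE_ob b) (FE_map b \<epsilon>) \<theta>"
  shows "a = a'"
  using assms(2) unfolding D_cong_def
proof (induction rule: ucong.induct)
  case (gen x y)
  then obtain n \<rho> f c c' where xy: "x = FE_map b \<epsilon> f c" "y = FE_map b \<epsilon> f c'" and
    r: "\<rho> \<in> D n" "is_mor f" "msrc f = fst \<rho>" "mtgt f = \<theta>"
    "(c, c') \<in> kpair (FE_ob b) (FE_map b \<epsilon>) \<rho>"
    unfolding D_rel_def by blast
  show ?case using irreducibleD[OF irr r] xy by simp
qed auto

lemma cong_push:
  assumes irr: "irreducible D (FE_ob b) (FE_map b \<epsilon>) (mtgt l)" and l: "is_mor l" "msrc l = t"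
    and "(a, a') \<in> D_cong D (FE_ob b) (FE_map b \<epsilon>) t"
  shows "FE_map b \<epsilon> l a = FE_map b \<epsilon> l a'"
  using assms(4) unfolding D_cong_def
proof (induction rule: ucong.induct)
  case (gen x y)
  then obtain n \<rho> f c c' where xy: "x = FE_map b \<epsilon> f c" "y = FE_map b \<epsilon> f c'" and
    r: "\<rho> \<in> D n" "is_mor f" "msrc f = fst \<rho>" "mtgt f = t"
    "(c, c') \<in> kpair (FE_ob b) (FE_map b \<epsilon>) \<rho>"
    unfolding D_rel_def by blast
  have m: "is_mor (mcomp l f)" using mcomp_is_mor[OF l(1) r(2)] r(4) l(2) by simp
  have "FE_map b \<epsilon> (mcomp l f) c = FE_map b \<epsilon> (mcomp l f) c'"
    by (rule irreducibleD[OF irr r(1) m]) (use r l in simp_all)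
  moreover have "mtgt f = msrc l" using r(4) l(2) by simp
  ultimately show ?case using xy FE_map_comp[OF l(1) r(2), of b \<epsilon>] by simp
next
  case (union x y x' y')
  then show ?case by (simp add: FE_map_Un)
qed auto

context
  fixes b :: "'o::preorder" and \<epsilon> :: 'e and Bob :: "'o seg set" and Bmor :: "'o smor set"
    and Tob :: "'o seg \<Rightarrow> 'x set" and Tmap :: "'o smor \<Rightarrow> 'x \<Rightarrow> 'x"
    and \<sigma> :: "'o seg \<Rightarrow> 'x \<Rightarrow> (nat \<Rightarrow> 'e) \<times> (nat \<Rightarrow> 'e)"
  assumes SA: "seq_alignment b \<epsilon> Bob Bmor Tob Tmap \<sigma>"
begin

lemma SA_mor: "h \<in> Bmor \<Longrightarrow> is_mor h \<and> msrc h \<in> Bob \<and> mtgt h \<in> Bob"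
  using SA unfolding seq_alignment_def is_subcat_def by blast

lemma SA_Tmap: "h \<in> Bmor \<Longrightarrow> x \<in> Tob (msrc h) \<Longrightarrow> Tmap h x \<in> Tob (mtgt h)"
  using SA unfolding seq_alignment_def is_functor_on_def by blast

lemma SA_nat: "h \<in> Bmor \<Longrightarrow> x \<in> Tob (msrc h) \<Longrightarrow>
    \<sigma> (mtgt h) (Tmap h x) = twoE_map b \<epsilon> h (\<sigma> (msrc h) x)"
  using SA unfolding seq_alignment_def by blast

lemma lan_rel_props:
  assumes "(p, p') \<in> lan_rel Bob Bmor Tob Tmap t"
  shows "p \<in> lan_elems Bob Tob t \<and> p' \<in> lan_elems Bob Tob t \<and> tw b \<epsilon> \<sigma> p = tw b \<epsilon> \<sigma> p'"
  using assms
proof (induction rule: lan_rel.induct)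
  case (gen h g x)
  have h: "is_mor h" "msrc h \<in> Bob" "mtgt h \<in> Bob" using SA_mor[OF gen(1)] by auto
  have m: "is_mor (mcomp g h)" using mcomp_is_mor[OF gen(2) h(1)] gen(3) by simp
  have T: "Tmap h x \<in> Tob (mtgt h)" using SA_Tmap[OF gen(1) gen(5)] .
  have "tw b \<epsilon> \<sigma> (msrc h, mcomp g h, x) = twoE_map b \<epsilon> g (twoE_map b \<epsilon> h (\<sigma> (msrc h) x))"
    unfolding tw_def using twoE_map_comp[OF gen(2) h(1)] gen(3) by simp
  also have "\<dots> = tw b \<epsilon> \<sigma> (mtgt h, g, Tmap h x)"
    unfolding tw_def using SA_nat[OF gen(1) gen(5)] by simp
  finally show ?case using h m T gen unfolding lan_elems_def by simp
next
  case (refl p)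
  then show ?case by simp
next
  case (sym p p')
  then show ?case by simp
next
  case (trans p p' p'')
  then show ?case by simp
qed

lemma lan_ob_rep:
  assumes "C \<in> lan_ob Bob Bmor Tob Tmap t"
  obtains p0 where "p0 \<in> lan_elems Bob Tob t" "C = lan_rel Bob Bmor Tob Tmap t `` {p0}" "p0 \<in> C"
proof -
  obtain p0 where p0: "p0 \<in> lan_elems Bob Tob t" "C = lan_rel Bob Bmor Tob Tmap t `` {p0}"
    using assms unfolding lan_ob_def by (auto elim: quotientE)
  moreover have "p0 \<in> C" using p0 lan_rel.refl by blast
  ultimately show ?thesis using that by blast
qed

lemma lan_ob_sigma:
  assumes C: "C \<in> lan_ob Bob Bmor Tob Tmap t" and p: "p \<in> C"
  shows "lan_sigma b \<epsilon> \<sigma> C = tw b \<epsilon> \<sigma> p"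
proof -
  obtain p0 where p0: "p0 \<in> lan_elems Bob Tob t" "C = lan_rel Bob Bmor Tob Tmap t `` {p0}"
    using lan_ob_rep[OF C] by blast
  have ne: "\<exists>q. q \<in> C" using p by blast
  have s: "(SOME q. q \<in> C) \<in> C" using someI_ex[OF ne] .
  have "tw b \<epsilon> \<sigma> p0 = tw b \<epsilon> \<sigma> (SOME q. q \<in> C)" using s p0(2) lan_rel_props by blast
  moreover have "tw b \<epsilon> \<sigma> p0 = tw b \<epsilon> \<sigma> p" using p p0(2) lan_rel_props by blast
  moreover have "lan_sigma b \<epsilon> \<sigma> C = tw b \<epsilon> \<sigma> (SOME q. q \<in> C)"
    unfolding lan_sigma_def tw_def ..
  ultimately show ?thesis by simp
qed

lemma lan_sigma_Env:
  assumes C: "C \<in> lan_ob Bob Bmor Tob Tmap t"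
  shows "fst (lan_sigma b \<epsilon> \<sigma> C) \<in> Env b t \<and> snd (lan_sigma b \<epsilon> \<sigma> C) \<in> Env b t"
proof -
  obtain p0 where p0: "p0 \<in> lan_elems Bob Tob t" "p0 \<in> C"
    using lan_ob_rep[OF C] by blast
  obtain \<beta> g x where pe: "p0 = (\<beta>, g, x)" by (cases p0)
  have "mtgt g = t" using p0(1) pe unfolding lan_elems_def by simp
  then show ?thesis using lan_ob_sigma[OF C p0(2)] pe env_map_Env[of b \<epsilon> g]
    unfolding tw_def twoE_map_def by auto
qed

lemma lan_rel_push:
  assumes "(p, p') \<in> lan_rel Bob Bmor Tob Tmap t" and l: "is_mor l" "msrc l = t"
  shows "((\<lambda>(\<beta>, g, x). (\<beta>, mcomp l g, x)) p, (\<lambda>(\<beta>, g, x). (\<beta>, mcomp l g, x)) p')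
           \<in> lan_rel Bob Bmor Tob Tmap (mtgt l)"
  using assms(1)
proof (induction rule: lan_rel.induct)
  case (gen h g x)
  have h: "is_mor h" using SA_mor[OF gen(1)] by auto
  have assoc: "mcomp l (mcomp g h) = mcomp (mcomp l g) h"
    using mcomp_assoc[OF gen(2) h] gen(3) by simp
  have lg: "is_mor (mcomp l g)" using mcomp_is_mor[OF l(1) gen(2)] gen(4) l(2) by simp
  have "((msrc h, mcomp (mcomp l g) h, x), (mtgt h, mcomp l g, Tmap h x))
          \<in> lan_rel Bob Bmor Tob Tmap (mtgt l)"
    by (rule lan_rel.gen) (use gen lg in simp_all)
  then show ?case using assoc by simp
next
  case (refl p)
  obtain \<beta> g x where pe: "p = (\<beta>, g, x)" by (cases p)
  have e: "\<beta> \<in> Bob" "is_mor g" "msrc g = \<beta>" "mtgt g = t" "x \<in> Tob \<beta>"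
    using refl pe unfolding lan_elems_def by auto
  have lg: "is_mor (mcomp l g)" using mcomp_is_mor[OF l(1) e(2)] e(4) l(2) by simp
  have "(\<beta>, mcomp l g, x) \<in> lan_elems Bob Tob (mtgt l)"
    using e lg unfolding lan_elems_def by simp
  then show ?case using pe by (simp add: lan_rel.refl)
next
  case (sym p p')
  show ?case by (rule lan_rel.sym[OF sym.IH])
next
  case (trans p p' p'')
  then show ?case by (blast intro: lan_rel.trans)
qed

lemma lan_map_props:
  assumes C: "C \<in> lan_ob Bob Bmor Tob Tmap t" and l: "is_mor l" "msrc l = t"
  shows "lan_map Bob Bmor Tob Tmap l C \<in> lan_ob Bob Bmor Tob Tmap (mtgt l) \<and>
         lan_sigma b \<epsilon> \<sigma> (lan_map Bob Bmor Tob Tmap l C) = twoE_map b \<epsilon> l (lan_sigma b \<epsilon> \<sigma> C)"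
proof -
  obtain p0 where p0: "p0 \<in> lan_elems Bob Tob t" "C = lan_rel Bob Bmor Tob Tmap t `` {p0}" "p0 \<in> C"
    using lan_ob_rep[OF C] by blast
  define push where "push = (\<lambda>(\<beta>::'o seg, g, x::'x). (\<beta>, mcomp l g, x))"
  have pr: "\<And>p p'. (p, p') \<in> lan_rel Bob Bmor Tob Tmap t \<Longrightarrow>
      (push p, push p') \<in> lan_rel Bob Bmor Tob Tmap (mtgt l)"
    unfolding push_def by (rule lan_rel_push[OF _ l])
  have LM: "lan_map Bob Bmor Tob Tmap l C = lan_rel Bob Bmor Tob Tmap (mtgt l) `` (push ` C)"
    unfolding lan_map_def push_def ..
  have eq: "lan_map Bob Bmor Tob Tmap l C = lan_rel Bob Bmor Tob Tmap (mtgt l) `` {push p0}"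
  proof
    show "lan_map Bob Bmor Tob Tmap l C \<subseteq> lan_rel Bob Bmor Tob Tmap (mtgt l) `` {push p0}"
    proof
      fix q assume "q \<in> lan_map Bob Bmor Tob Tmap l C"
      then obtain p where p: "p \<in> C" "(push p, q) \<in> lan_rel Bob Bmor Tob Tmap (mtgt l)"
        unfolding LM by blast
      have "(p0, p) \<in> lan_rel Bob Bmor Tob Tmap t" using p(1) p0(2) by blast
      then have "(push p0, push p) \<in> lan_rel Bob Bmor Tob Tmap (mtgt l)" by (rule pr)
      then show "q \<in> lan_rel Bob Bmor Tob Tmap (mtgt l) `` {push p0}"
        using p(2) by (blast intro: lan_rel.trans)
    qed
    show "lan_rel Bob Bmor Tob Tmap (mtgt l) `` {push p0} \<subseteq> lan_map Bob Bmor Tob Tmap l C"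
      unfolding LM using p0(3) by blast
  qed
  have pp: "(push p0, push p0) \<in> lan_rel Bob Bmor Tob Tmap (mtgt l)"
    using pr lan_rel.refl[OF p0(1)] by blast
  have pe: "push p0 \<in> lan_elems Bob Tob (mtgt l)" using lan_rel_props[OF pp] by blast
  have ob: "lan_map Bob Bmor Tob Tmap l C \<in> lan_ob Bob Bmor Tob Tmap (mtgt l)"
    unfolding eq lan_ob_def by (rule quotientI[OF pe])
  have pin: "push p0 \<in> lan_map Bob Bmor Tob Tmap l C" unfolding eq using pp by blast
  obtain \<beta> g x where p0e: "p0 = (\<beta>, g, x)" by (cases p0)
  have e: "is_mor g" "mtgt g = t" using p0(1) p0e unfolding lan_elems_def by auto
  have "lan_sigma b \<epsilon> \<sigma> (lan_map Bob Bmor Tob Tmap l C) = tw b \<epsilon> \<sigma> (push p0)"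
    by (rule lan_ob_sigma[OF ob pin])
  also have "\<dots> = twoE_map b \<epsilon> (mcomp l g) (\<sigma> \<beta> x)" unfolding push_def p0e tw_def by simp
  also have "\<dots> = twoE_map b \<epsilon> l (twoE_map b \<epsilon> g (\<sigma> \<beta> x))"
    using twoE_map_comp[OF l(1) e(1)] e(2) l(2) by simp
  also have "\<dots> = twoE_map b \<epsilon> l (lan_sigma b \<epsilon> \<sigma> C)"
    using lan_ob_sigma[OF C p0(3)] p0e unfolding tw_def by simp
  finally show ?thesis using ob by blast
qed

lemma FLan_Un: "A \<in> FLan_ob Bob Bmor Tob Tmap t \<Longrightarrow> B \<in> FLan_ob Bob Bmor Tob Tmap t \<Longrightarrow>
    A \<union> B \<in> FLan_ob Bob Bmor Tob Tmap t"
  unfolding FLan_ob_def by (rule FinPow_Un)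

lemma val_FE:
  assumes "A \<in> FLan_ob Bob Bmor Tob Tmap t"
  shows "val b \<epsilon> \<sigma> A \<in> FE_ob b t"
proof -
  have fin: "finite A" and sub: "A \<subseteq> lan_ob Bob Bmor Tob Tmap t"
    using assms unfolding FLan_ob_def FinPow_def by auto
  have "finite (fml (lan_sigma b \<epsilon> \<sigma> ` A))" unfolding fml_def using fin by (auto split: prod.splits)
  moreover have "fml (lan_sigma b \<epsilon> \<sigma> ` A) \<subseteq> Env b t"
  proof
    fix u assume "u \<in> fml (lan_sigma b \<epsilon> \<sigma> ` A)"
    then obtain C where C: "C \<in> A" and u: "u = fst (lan_sigma b \<epsilon> \<sigma> C) \<or> u = snd (lan_sigma b \<epsilon> \<sigma> C)"
      unfolding fml_def by (auto split: prod.splits)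
    then show "u \<in> Env b t" using lan_sigma_Env sub by blast
  qed
  ultimately show ?thesis unfolding val_def FE_ob_def FinPow_def by simp
qed

lemma FLan_map_props:
  assumes A: "A \<in> FLan_ob Bob Bmor Tob Tmap t" and l: "is_mor l" "msrc l = t"
  shows "FLan_map Bob Bmor Tob Tmap l A \<in> FLan_ob Bob Bmor Tob Tmap (mtgt l) \<and>
         val b \<epsilon> \<sigma> (FLan_map Bob Bmor Tob Tmap l A) = FE_map b \<epsilon> l (val b \<epsilon> \<sigma> A)"
proof -
  have fin: "finite A" and sub: "A \<subseteq> lan_ob Bob Bmor Tob Tmap t"
    using A unfolding FLan_ob_def FinPow_def by auto
  have P: "\<And>C. C \<in> A \<Longrightarrow> lan_map Bob Bmor Tob Tmap l C \<in> lan_ob Bob Bmor Tob Tmap (mtgt l) \<and>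
         lan_sigma b \<epsilon> \<sigma> (lan_map Bob Bmor Tob Tmap l C) = twoE_map b \<epsilon> l (lan_sigma b \<epsilon> \<sigma> C)"
    using lan_map_props sub l by blast
  have ob: "FLan_map Bob Bmor Tob Tmap l A \<in> FLan_ob Bob Bmor Tob Tmap (mtgt l)"
    unfolding FLan_map_def FLan_ob_def FinPow_def using fin P by auto
  have "lan_sigma b \<epsilon> \<sigma> ` FLan_map Bob Bmor Tob Tmap l A = twoE_map b \<epsilon> l ` lan_sigma b \<epsilon> \<sigma> ` A"
    unfolding FLan_map_def image_image using P by (auto intro: image_cong)
  then have "val b \<epsilon> \<sigma> (FLan_map Bob Bmor Tob Tmap l A) = FE_map b \<epsilon> l (val b \<epsilon> \<sigma> A)"
    unfolding val_def FE_map_def by (simp add: fml_twoE)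
  then show ?thesis using ob by blast
qed

lemma DET_irr:
  assumes irr: "irreducible D (FE_ob b) (FE_map b \<epsilon>) \<theta>"
    and "(B, B') \<in> DET_cong D b \<epsilon> Bob Bmor Tob Tmap \<sigma> \<theta>"
  shows "val b \<epsilon> \<sigma> B = val b \<epsilon> \<sigma> B'"
  using assms(2) unfolding DET_cong_def
proof (induction rule: ucong.induct)
  case (gen x y)
  then have r: "recmap D b \<epsilon> \<sigma> \<theta> x = recmap D b \<epsilon> \<sigma> \<theta> y" "x \<in> FLan_ob Bob Bmor Tob Tmap \<theta>"
    unfolding rec_pb_def by auto
  have "(val b \<epsilon> \<sigma> x, val b \<epsilon> \<sigma> x) \<in> D_cong D (FE_ob b) (FE_map b \<epsilon>) \<theta>"
    unfolding D_cong_def by (rule ucong.refl) (rule val_FE[OF r(2)])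
  then have "val b \<epsilon> \<sigma> x \<in> D_cong D (FE_ob b) (FE_map b \<epsilon>) \<theta> `` {val b \<epsilon> \<sigma> y}"
    using r(1) unfolding recmap_val by blast
  then have "(val b \<epsilon> \<sigma> y, val b \<epsilon> \<sigma> x) \<in> D_cong D (FE_ob b) (FE_map b \<epsilon>) \<theta>" by blast
  then show ?case using irr_cong_eq[OF irr] by metis
next
  case (union x y x' y')
  then show ?case by (simp add: val_Un)
qed auto

lemma DET_push:
  assumes irr: "irreducible D (FE_ob b) (FE_map b \<epsilon>) (mtgt l)" and l: "is_mor l" "msrc l = t"
    and "(A, A') \<in> DET_cong D b \<epsilon> Bob Bmor Tob Tmap \<sigma> t"
  shows "FE_map b \<epsilon> l (val b \<epsilon> \<sigma> A) = FE_map b \<epsilon> l (val b \<epsilon> \<sigma> A')"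
  using assms(4) unfolding DET_cong_def
proof (induction rule: ucong.induct)
  case (gen x y)
  then have r: "recmap D b \<epsilon> \<sigma> t x = recmap D b \<epsilon> \<sigma> t y" "x \<in> FLan_ob Bob Bmor Tob Tmap t"
    unfolding rec_pb_def by auto
  have "(val b \<epsilon> \<sigma> x, val b \<epsilon> \<sigma> x) \<in> D_cong D (FE_ob b) (FE_map b \<epsilon>) t"
    unfolding D_cong_def by (rule ucong.refl) (rule val_FE[OF r(2)])
  then have "val b \<epsilon> \<sigma> x \<in> D_cong D (FE_ob b) (FE_map b \<epsilon>) t `` {val b \<epsilon> \<sigma> y}"
    using r(1) unfolding recmap_val by blast
  then have "(val b \<epsilon> \<sigma> y, val b \<epsilon> \<sigma> x) \<in> D_cong D (FE_ob b) (FE_map b \<epsilon>) t" by blast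
  then show ?case using cong_push[OF irr l] by metis
next
  case (union x y x' y')
  then show ?case by (simp add: val_Un FE_map_Un)
qed auto

end

theorem mainTheorem10:
  fixes D :: "nat \<Rightarrow> ('o::preorder) cone set" and b :: 'o and \<epsilon> :: 'e
    and Bob :: "'o seg set" and Bmor :: "'o smor set"
    and Tob :: "'o seg \<Rightarrow> 'x set" and Tmap :: "'o smor \<Rightarrow> 'x \<Rightarrow> 'x"
    and \<sigma> :: "'o seg \<Rightarrow> 'x \<Rightarrow> (nat \<Rightarrow> 'e) \<times> (nat \<Rightarrow> 'e)"
  assumes "recomb_chromology D"
    and "recomb_scheme D (FE_ob b :: 'o seg \<Rightarrow> (nat \<Rightarrow> 'e) set set) (FE_map b \<epsilon>)"
    and "seq_alignment b \<epsilon> Bob Bmor Tob Tmap \<sigma>"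
  shows "mon_pedigrad D (DET_ob D b \<epsilon> Bob Bmor Tob Tmap \<sigma>) (DET_map D b \<epsilon> Bob Bmor Tob Tmap \<sigma>)"
  unfolding mon_pedigrad_def
proof (intro allI ballI inj_onI)
  note SA = assms(3)
  fix n \<rho> K K'
  assume \<rho>: "\<rho> \<in> D n" and K: "K \<in> DET_ob D b \<epsilon> Bob Bmor Tob Tmap \<sigma> (fst \<rho>)"
    and K': "K' \<in> DET_ob D b \<epsilon> Bob Bmor Tob Tmap \<sigma> (fst \<rho>)"
    and eq: "map (\<lambda>l. DET_map D b \<epsilon> Bob Bmor Tob Tmap \<sigma> l K) (snd \<rho>) =
             map (\<lambda>l. DET_map D b \<epsilon> Bob Bmor Tob Tmap \<sigma> l K') (snd \<rho>)"
  define \<tau> where "\<tau> = fst \<rho>"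
  let ?R = "DET_cong D b \<epsilon> Bob Bmor Tob Tmap \<sigma>"
  let ?F = "FLan_ob Bob Bmor Tob Tmap"
  let ?v = "val b \<epsilon> \<sigma>"
  have cone: "cone_in n \<rho>" using assms(1) \<rho> unfolding recomb_chromology_def by blast
  have \<tau>seg: "is_seg \<tau>" using cone unfolding cone_in_def \<tau>_def by blast
  have legs: "\<And>l. l \<in> set (snd \<rho>) \<Longrightarrow> is_mor l \<and> msrc l = \<tau>"
    using cone unfolding cone_in_def \<tau>_def by blast
  have irr: "\<And>l. l \<in> set (snd \<rho>) \<Longrightarrow> irreducible D (FE_ob b) (FE_map b \<epsilon>) (mtgt l)"
    using assms(2) \<rho> unfolding recomb_scheme_def by blast
  have Rin: "\<And>t x y. (x, y) \<in> ?R t \<Longrightarrow> x \<in> ?F t \<and> y \<in> ?F t"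
    unfolding DET_cong_def by (rule ucong_in) (simp add: FLan_Un[OF SA])
  obtain A where A: "A \<in> ?F \<tau>" "K = ?R \<tau> `` {A}"
    using K unfolding DET_ob_def \<tau>_def by (auto elim: quotientE)
  obtain A' where A': "A' \<in> ?F \<tau>" "K' = ?R \<tau> `` {A'}"
    using K' unfolding DET_ob_def \<tau>_def by (auto elim: quotientE)
  have AK: "A \<in> K" using A unfolding DET_cong_def by (auto intro: ucong.refl)
  have legeq: "FE_map b \<epsilon> l (?v A) = FE_map b \<epsilon> l (?v A')" if l: "l \<in> set (snd \<rho>)" for l
  proof -
    have lm: "is_mor l" "msrc l = \<tau>" using legs[OF l] by auto
    have Dm: "DET_map D b \<epsilon> Bob Bmor Tob Tmap \<sigma> l K = DET_map D b \<epsilon> Bob Bmor Tob Tmap \<sigma> l K'"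
      using eq l by (simp add: map_eq_conv)
    have FA: "FLan_map Bob Bmor Tob Tmap l A \<in> ?F (mtgt l)"
      and vA: "?v (FLan_map Bob Bmor Tob Tmap l A) = FE_map b \<epsilon> l (?v A)"
      using FLan_map_props[OF SA A(1) lm] by auto
    have "(FLan_map Bob Bmor Tob Tmap l A, FLan_map Bob Bmor Tob Tmap l A) \<in> ?R (mtgt l)"
      unfolding DET_cong_def by (rule ucong.refl[OF FA])
    then have "FLan_map Bob Bmor Tob Tmap l A \<in> DET_map D b \<epsilon> Bob Bmor Tob Tmap \<sigma> l K"
      unfolding DET_map_def using AK by blast
    then have "FLan_map Bob Bmor Tob Tmap l A \<in> DET_map D b \<epsilon> Bob Bmor Tob Tmap \<sigma> l K'"
      using Dm by simp
    then obtain A'' where A'': "A'' \<in> K'"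
      "(FLan_map Bob Bmor Tob Tmap l A'', FLan_map Bob Bmor Tob Tmap l A) \<in> ?R (mtgt l)"
      unfolding DET_map_def by blast
    have r'': "(A', A'') \<in> ?R \<tau>" using A'' A' by blast
    have F'': "A'' \<in> ?F \<tau>" using Rin[OF r''] by blast
    have "?v (FLan_map Bob Bmor Tob Tmap l A'') = ?v (FLan_map Bob Bmor Tob Tmap l A)"
      using DET_irr[OF SA irr[OF l] A''(2)] .
    moreover have "?v (FLan_map Bob Bmor Tob Tmap l A'') = FE_map b \<epsilon> l (?v A'')"
      using FLan_map_props[OF SA F'' lm] by auto
    moreover have "FE_map b \<epsilon> l (?v A') = FE_map b \<epsilon> l (?v A'')"
      using DET_push[OF SA irr[OF l] lm r''] .
    ultimately show ?thesis using vA by simp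
  qed
  have vA: "?v A \<in> FE_ob b \<tau>" "?v A' \<in> FE_ob b \<tau>" using val_FE[OF SA] A(1) A'(1) by auto
  have kp: "(?v A, ?v A') \<in> kpair (FE_ob b) (FE_map b \<epsilon>) \<rho>"
    unfolding kpair_def using vA legeq \<tau>_def by auto
  have "(FE_map b \<epsilon> (mid \<tau>) (?v A), FE_map b \<epsilon> (mid \<tau>) (?v A')) \<in> D_rel D (FE_ob b) (FE_map b \<epsilon>) \<tau>"
    unfolding D_rel_def using \<rho> mid_is_mor[OF \<tau>seg] kp \<tau>_def by fastforce
  moreover have "FE_map b \<epsilon> (mid \<tau>) (?v A) = ?v A" by (rule FE_map_mid[OF \<tau>seg vA(1)])
  moreover have "FE_map b \<epsilon> (mid \<tau>) (?v A') = ?v A'" by (rule FE_map_mid[OF \<tau>seg vA(2)])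
  ultimately have "(?v A, ?v A') \<in> D_rel D (FE_ob b) (FE_map b \<epsilon>) \<tau>" by simp
  then have "(?v A, ?v A') \<in> D_cong D (FE_ob b) (FE_map b \<epsilon>) \<tau>"
    unfolding D_cong_def using vA by (rule ucong.gen)
  then have "recmap D b \<epsilon> \<sigma> \<tau> A = recmap D b \<epsilon> \<sigma> \<tau> A'"
    unfolding recmap_val D_cong_def by (rule ucong_class_eq)
  then have "(A, A') \<in> ?R \<tau>"
    unfolding DET_cong_def using A(1) A'(1) by (intro ucong.gen) (auto simp: rec_pb_def)
  then show "K = K'" unfolding A(2) A'(2) DET_cong_def by (rule ucong_class_eq)
qed

end
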